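(* Let $F$ be a Ferrers diagram, $T\in\mathsf{EWtab}(F)$, $S=S(T)$, and let $(j,k)$ be a cell of $F$ ($j\in\mathsf{rows}(F)$, $k\in\mathsf{cols}(F)$). Then $T_{jk}$ is a cornersupport in $T$ if and only if there exists a cell $(j',k')$ of $F$ with $j'\ne j$, $k'\ne k$ such that: when $T_{jk}=0$, we have $T_{j'k'}=1$, $T_{jk'}=0$ (with $(j,k')$ a cell of $F$) and $S_{j'k}=0$; when $T_{jk}=1$, we have $T_{j'k'}=0$, $T_{j'k}=1$ (with $(j',k)$ a cell of $F$) and $S_{jk'}=1$.
   Context: Ferrers diagrams and graphs: a Ferrers diagram $F$ (English convention) of semiperimeter $n+1$ has rows and columns labeled by $0,\ldots,n$: the $n+1$ unit steps of its south-east boundary path, traversed from top-right to bottom-left, are labeled $0,\ldots,n$; a vertical step labels the row it bounds, a horizontal step the column it bounds (top row labeled $0$). $\mathsf{rows}(F)$, $\mathsf{cols}(F)$ are the label sets; $F$ has a cell in row $i$, column $j$ iff $i<j$. $G(F)$ has vertex set $\{0,\ldots,n\}$ with edges $\{i,j\}$ for $i\in\mathsf{rows}(F)$, $j\in\mathsf{cols}(F)$, $i<j$. Sandpile model on $G(F)$ with sink $0$: configurations $c\in\mathbb{N}^n$; non-sink $v$ unstable if $c_v\ge\deg(v)$; toppling sends one grain to each neighbour (grains to $0$ disappear); toppling the sink adds one grain to each neighbour of $0$. Canonical toppling of a recurrent configuration $c$: topple the sink ($U^{(0)}_c=\{0\}$), then alternately topple simultaneously all unstable vertices in $\mathsf{cols}(F)$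 ($V^{(1)}_c$), all unstable in $\mathsf{rows}(F)$ ($U^{(1)}_c$), etc.; $\mathsf{CanonTop}(c)=(U^{(0)}_c,V^{(1)}_c,U^{(1)}_c,\ldots)$ is an ordered partition of $\{0,\ldots,n\}$. EW-tableaux: $0/1$-fillings $T$ of $F$ ($T_{ij}$ = entry in row $i$, column $j$) with top row all 1s, a 0 in every other row, and no rectangle with 0s in two diagonally opposite corners and 1s in the other two; $\mathsf{EWtab}(F)$ is their set. $\phi_{TC}(T)$ is the (recurrent) configuration with $c_i$ = number of 1s in row $i$ ($i\in\mathsf{rows}(F)$), $c_i$ = number of 0s in column $i$ ($i\in\mathsf{cols}(F)$). $\mathsf{CanonTop}(T):=\mathsf{CanonTop}(\phi_{TC}(T))$. Supplementary tableau $S=S(T)$: the $|\mathsf{rows}(F)|\times|\mathsf{cols}(F)|$ array with $S_{ij}=1$ if row label $i$ lies in an earlier block of $\mathsf{CanonTop}(T)$ than column label $j$, else $0$ (it agrees with $T$ on cells of $F$). An entry $x$ of $T$ at $(j,k)$ is a cornersupport entry (the cell is a cornersupport) iff there exist a row $j'\ne j$ and column $k'\ne k$ with $S_{j'k'}\ne x$ and $S_{j'k}=S_{jk'}=x$. *)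

theory Defs
  imports Main
begin

text \<open>A Ferrers diagram of semiperimeter n+1 is encoded by n and its set R of row
labels (a subset of {0..n}); the column labels are the remaining labels.
The boundary path starts with a vertical step (row 0) and ends with a
horizontal step (column n).\<close>

definition ferrers :: "nat \<Rightarrow> nat set \<Rightarrow> bool" where
  "ferrers n R \<longleftrightarrow> 1 \<le> n \<and> R \<subseteq> {0..n} \<and> 0 \<in> R \<and> n \<notin> R"

definition colset :: "nat \<Rightarrow> nat set \<Rightarrow> nat set" where
  "colset n R = {0..n} - R"

definition is_cell :: "nat \<Rightarrow> nat set \<Rightarrow> nat \<Rightarrow> nat \<Rightarrow> bool" where
  "is_cell n R i j \<longleftrightarrow> i \<in> R \<and> j \<in> colset n R \<and> i < j"

definition adj :: "nat \<Rightarrow> nat set \<Rightarrow> nat \<Rightarrow> nat \<Rightarrow> bool" where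
  "adj n R v w \<longleftrightarrow> is_cell n R v w \<or> is_cell n R w v"

definition gdeg :: "nat \<Rightarrow> nat set \<Rightarrow> nat \<Rightarrow> nat" where
  "gdeg n R v = card {w \<in> {0..n}. adj n R v w}"

text \<open>Simultaneous toppling of a set A of vertices (the value at the sink 0 is
irrelevant, grains sent to 0 are ignored by never looking at that value).\<close>
definition topple :: "nat \<Rightarrow> nat set \<Rightarrow> nat set \<Rightarrow> (nat \<Rightarrow> int) \<Rightarrow> (nat \<Rightarrow> int)" where
  "topple n R A c = (\<lambda>w. c w - (if w \<in> A then int (gdeg n R w) else 0)
                          + int (card {a \<in> A. a \<le> n \<and> adj n R a w}))"

definition unstable_in :: "nat \<Rightarrow> nat set \<Rightarrow> nat set \<Rightarrow> (nat \<Rightarrow> int) \<Rightarrow> nat set" where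
  "unstable_in n R X c = {v \<in> X. 0 < v \<and> v \<le> n \<and> int (gdeg n R v) \<le> c v}"

text \<open>canon_state n R c k = (k-th block of the canonical toppling, configuration after it).
Block 0 is U0 = {0}; odd blocks are V(1), V(2), ... (columns), even blocks k >= 2 are
U(1), U(2), ... (rows).\<close>
primrec canon_state :: "nat \<Rightarrow> nat set \<Rightarrow> (nat \<Rightarrow> int) \<Rightarrow> nat \<Rightarrow> nat set \<times> (nat \<Rightarrow> int)" where
  "canon_state n R c 0 = ({0}, topple n R {0} c)"
| "canon_state n R c (Suc k) =
     (let c' = snd (canon_state n R c k);
          B = unstable_in n R (if even k then colset n R else R) c'
      in (B, topple n R B c'))"

definition canon_block :: "nat \<Rightarrow> nat set \<Rightarrow> (nat \<Rightarrow> int) \<Rightarrow> nat \<Rightarrow> nat set" where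
  "canon_block n R c k = fst (canon_state n R c k)"

definition block_index :: "nat \<Rightarrow> nat set \<Rightarrow> (nat \<Rightarrow> int) \<Rightarrow> nat \<Rightarrow> nat" where
  "block_index n R c v = (LEAST k. v \<in> canon_block n R c k)"

text \<open>EW-tableaux: 0/1 fillings (True = 1), False outside the cells.\<close>
definition EWtab :: "nat \<Rightarrow> nat set \<Rightarrow> (nat \<Rightarrow> nat \<Rightarrow> bool) set" where
  "EWtab n R = {T.
     (\<forall>i j. \<not> is_cell n R i j \<longrightarrow> \<not> T i j) \<and>
     (\<forall>j. is_cell n R 0 j \<longrightarrow> T 0 j) \<and>
     (\<forall>i\<in>R. i \<noteq> 0 \<longrightarrow> (\<exists>j. is_cell n R i j \<and> \<not> T i j)) \<and>
     (\<forall>i i' j j'. is_cell n R i j \<and> is_cell n R i j' \<and> is_cell n R i' j \<and> is_cell n R i' j'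
        \<longrightarrow> \<not> (\<not> T i j \<and> \<not> T i' j' \<and> T i j' \<and> T i' j))}"

definition phiTC :: "nat \<Rightarrow> nat set \<Rightarrow> (nat \<Rightarrow> nat \<Rightarrow> bool) \<Rightarrow> (nat \<Rightarrow> int)" where
  "phiTC n R T = (\<lambda>i.
     if i = 0 \<or> n < i then 0
     else if i \<in> R then int (card {j. is_cell n R i j \<and> T i j})
     else int (card {r. is_cell n R r i \<and> \<not> T r i}))"

definition suppl :: "nat \<Rightarrow> nat set \<Rightarrow> (nat \<Rightarrow> nat \<Rightarrow> bool) \<Rightarrow> nat \<Rightarrow> nat \<Rightarrow> bool" where
  "suppl n R T i j \<longleftrightarrow> block_index n R (phiTC n R T) i < block_index n R (phiTC n R T) j"

definition cornersupport :: "nat \<Rightarrow> nat set \<Rightarrow> (nat \<Rightarrow> nat \<Rightarrow> bool) \<Rightarrow> nat \<Rightarrow> nat \<Rightarrow> bool" where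
  "cornersupport n R T j k \<longleftrightarrow>
     (\<exists>j'\<in>R. \<exists>k'\<in>colset n R. j' \<noteq> j \<and> k' \<noteq> k \<and>
        suppl n R T j' k' \<noteq> T j k \<and> suppl n R T j' k = T j k \<and> suppl n R T j k' = T j k)"

end

theory Submission
  imports Defs
begin
lemma nostuck:
  assumes rect: "\<And>i i' j j'. is_cell n R i j \<Longrightarrow> is_cell n R i j' \<Longrightarrow> is_cell n R i' j \<Longrightarrow> is_cell n R i' j'
        \<Longrightarrow> \<not> (\<not> T i j \<and> \<not> T i' j' \<and> T i j' \<and> T i' j)"
    and out: "\<And>i j. T i j \<Longrightarrow> is_cell n R i j"
  shows "finite B \<Longrightarrow> (\<forall>r\<in>A. \<exists>c\<in>B. is_cell n R r c \<and> \<not> T r c)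
    \<Longrightarrow> (\<forall>c\<in>B. \<exists>r\<in>A. is_cell n R r c \<and> T r c) \<Longrightarrow> B = {}"
proof (induct "card B" arbitrary: A B rule: less_induct)
  case less
  show ?case
  proof (rule ccontr)
    assume ne: "B \<noteq> {}"
    define m where "m = Max B"
    have mB: "m \<in> B" using ne less.prems(1) by (simp add: m_def)
    have mmax: "\<And>c. c \<in> B \<Longrightarrow> c \<le> m" using less.prems(1) by (simp add: m_def)
    define A1 where "A1 = {r\<in>A. T r m}"
    define B1 where "B1 = {c \<in> B - {m}. \<forall>r\<in>A. is_cell n R r c \<and> T r c \<longrightarrow> r \<in> A1}"
    have key: "c \<in> B1" if "r \<in> A1" "c \<in> B" "is_cell n R r c" "\<not> T r c" for r c
    proof -
      have "T r m" using that(1) by (simp add: A1_def)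
      hence crm: "is_cell n R r m" using out by blast
      hence "c \<noteq> m" using that(4) \<open>T r m\<close> by auto
      hence "c < m" using mmax that(2) by force
      have "r' \<in> A1" if "r' \<in> A" "is_cell n R r' c" "T r' c" for r'
      proof -
        have "is_cell n R r' m" using that(2) crm \<open>c < m\<close> by (auto simp: is_cell_def)
        hence "T r' m" using rect[of r c m r'] \<open>is_cell n R r c\<close> crm that \<open>\<not> T r c\<close> \<open>T r m\<close> by blast
        thus ?thesis using that(1) by (simp add: A1_def)
      qed
      thus ?thesis using \<open>c \<noteq> m\<close> that(2) by (auto simp: B1_def)
    qed
    have h1: "\<forall>r\<in>A1. \<exists>c\<in>B1. is_cell n R r c \<and> \<not> T r c"
    proof
      fix r assume "r \<in> A1"
      then obtain c where "c \<in> B" "is_cell n R r c" "\<not> T r c" using less.prems(2) by (auto simp: A1_def)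
      thus "\<exists>c\<in>B1. is_cell n R r c \<and> \<not> T r c" using key \<open>r \<in> A1\<close> by blast
    qed
    have h2: "\<forall>c\<in>B1. \<exists>r\<in>A1. is_cell n R r c \<and> T r c"
    proof
      fix c assume "c \<in> B1"
      then obtain r where "r \<in> A" "is_cell n R r c" "T r c" using less.prems(3) by (auto simp: B1_def)
      thus "\<exists>r\<in>A1. is_cell n R r c \<and> T r c" using \<open>c \<in> B1\<close> by (auto simp: B1_def)
    qed
    have "B1 \<subseteq> B - {m}" by (auto simp: B1_def)
    hence "card B1 < card B" using mB less.prems(1)
      by (metis card_Diff1_less card_mono finite_Diff le_less_trans)
    moreover have "finite B1" using \<open>B1 \<subseteq> B - {m}\<close> less.prems(1) finite_subset by blast
    ultimately have "B1 = {}" using less.hyps h1 h2 by blast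
    moreover obtain r where "r \<in> A" "is_cell n R r m" "T r m" using less.prems(3) mB by blast
    hence "r \<in> A1" by (simp add: A1_def)
    then obtain c where "c \<in> B" "is_cell n R r c" "\<not> T r c" using less.prems(2) by (auto simp: A1_def)
    ultimately show False using key \<open>r \<in> A1\<close> by blast
  qed
qed

locale ewt =
  fixes n :: nat and R :: "nat set" and T :: "nat \<Rightarrow> nat \<Rightarrow> bool"
  assumes fer: "ferrers n R" and ew: "T \<in> EWtab n R"
begin

lemma ew_out: "T i j \<Longrightarrow> is_cell n R i j" using ew by (auto simp: EWtab_def)
lemma ew_top: "is_cell n R 0 j \<Longrightarrow> T 0 j" using ew by (auto simp: EWtab_def)
lemma ew_zero: "i \<in> R \<Longrightarrow> i \<noteq> 0 \<Longrightarrow> \<exists>j. is_cell n R i j \<and> \<not> T i j" using ew by (auto simp: EWtab_def)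
lemma ew_rect: "is_cell n R i j \<Longrightarrow> is_cell n R i j' \<Longrightarrow> is_cell n R i' j \<Longrightarrow> is_cell n R i' j'
        \<Longrightarrow> \<not> (\<not> T i j \<and> \<not> T i' j' \<and> T i j' \<and> T i' j)" using ew by (auto simp: EWtab_def)

lemma R_sub: "R \<subseteq> {0..n}" using fer by (simp add: ferrers_def)
lemma zero_R: "0 \<in> R" using fer by (simp add: ferrers_def)
lemma col_sub: "colset n R \<subseteq> {0..n}" by (auto simp: colset_def)
lemma col_notR: "v \<in> colset n R \<Longrightarrow> v \<notin> R" by (auto simp: colset_def)
lemma col_nz: "v \<in> colset n R \<Longrightarrow> v \<noteq> 0" using zero_R by (auto simp: colset_def) (metis gr0I)
lemma RC_all: "R \<union> colset n R = {0..n}" using R_sub by (auto simp: colset_def)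
lemma cellD: "is_cell n R i j \<Longrightarrow> i \<in> R \<and> j \<in> colset n R \<and> i < j \<and> j \<le> n"
  by (auto simp: is_cell_def colset_def)

definition ones where "ones c = {r. is_cell n R r c \<and> T r c}"
definition zeros where "zeros r = {c. is_cell n R r c \<and> \<not> T r c}"
definition ready where "ready D v = (if v \<in> R then zeros v \<subseteq> D else ones v \<subseteq> D)"
definition c0 where "c0 = phiTC n R T"
definition blk where "blk k = canon_block n R c0 k"
definition Dk where "Dk k = (\<Union>m\<in>{..k}. blk m)"
definition cfg where "cfg D w = c0 w - (if w \<in> D then int (gdeg n R w) else 0)
      + int (card {a\<in>D. a \<le> n \<and> adj n R a w})"
definition Xs where "Xs k = (if even k then colset n R else R)"
definition consis where "consis D \<longleftrightarrow> (\<forall>r c. is_cell n R r c \<longrightarrow>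
     (r \<in> D \<and> c \<notin> D \<longrightarrow> T r c) \<and> (c \<in> D \<and> r \<notin> D \<longrightarrow> \<not> T r c))"
definition invk where "invk k \<longleftrightarrow> snd (canon_state n R c0 k) = cfg (Dk k) \<and> Dk k \<subseteq> {0..n}
     \<and> 0 \<in> Dk k \<and> consis (Dk k)"

lemma consisD1: "consis D \<Longrightarrow> is_cell n R r c \<Longrightarrow> r \<in> D \<Longrightarrow> c \<notin> D \<Longrightarrow> T r c"
  unfolding consis_def by blast
lemma consisD2: "consis D \<Longrightarrow> is_cell n R r c \<Longrightarrow> c \<in> D \<Longrightarrow> r \<notin> D \<Longrightarrow> \<not> T r c"
  unfolding consis_def by blast

lemma fin_row: "finite {c. is_cell n R v c}"
  by (rule finite_subset[of _ "{0..n}"]) (auto dest: cellD)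
lemma fin_col: "finite {r. is_cell n R r v}"
  by (rule finite_subset[of _ "{0..n}"]) (auto dest: cellD)
lemma fin_zeros: "finite (zeros v)" by (rule finite_subset[OF _ fin_row]) (auto simp: zeros_def)
lemma fin_ones: "finite (ones v)" by (rule finite_subset[OF _ fin_col]) (auto simp: ones_def)

lemma gdeg_row: "v \<in> R \<Longrightarrow> gdeg n R v = card {c. is_cell n R v c \<and> T v c} + card (zeros v)"
proof -
  assume v: "v \<in> R"
  have "{w \<in> {0..n}. adj n R v w} = {c. is_cell n R v c \<and> T v c} \<union> zeros v"
    using v by (auto simp: adj_def zeros_def dest: cellD col_notR)
  moreover have "finite {c. is_cell n R v c \<and> T v c}" by (rule finite_subset[OF _ fin_row]) auto
  ultimately show ?thesis unfolding gdeg_def using fin_zeros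
    by (simp add: card_Un_disjoint zeros_def disjoint_iff)
qed

lemma gdeg_col: "v \<in> colset n R \<Longrightarrow> gdeg n R v = card (ones v) + card {r. is_cell n R r v \<and> \<not> T r v}"
proof -
  assume v: "v \<in> colset n R"
  have "{w \<in> {0..n}. adj n R v w} = ones v \<union> {r. is_cell n R r v \<and> \<not> T r v}"
    using v by (auto simp: adj_def ones_def dest: cellD col_notR)
  moreover have "finite {r. is_cell n R r v \<and> \<not> T r v}" by (rule finite_subset[OF _ fin_col]) auto
  ultimately show ?thesis unfolding gdeg_def using fin_ones
    by (simp add: card_Un_disjoint ones_def disjoint_iff)
qed

lemma nb_row: "v \<in> R \<Longrightarrow> {a\<in>D. a \<le> n \<and> adj n R a v} = {a\<in>D. is_cell n R v a}"
  by (auto simp: adj_def dest: cellD col_notR)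
lemma nb_col: "v \<in> colset n R \<Longrightarrow> {a\<in>D. a \<le> n \<and> adj n R a v} = {a\<in>D. is_cell n R a v}"
  by (auto simp: adj_def dest: cellD col_notR)

lemma c0_row: "v \<in> R \<Longrightarrow> v \<noteq> 0 \<Longrightarrow> c0 v = int (card {j. is_cell n R v j \<and> T v j})"
  using R_sub by (auto simp: c0_def phiTC_def)
lemma c0_col: "v \<in> colset n R \<Longrightarrow> c0 v = int (card {r. is_cell n R r v \<and> \<not> T r v})"
  using col_sub col_nz col_notR by (fastforce simp: c0_def phiTC_def)

lemma stab_row:
  assumes v: "v \<in> R" "v \<noteq> 0" and cD: "consis D" and fD: "finite D"
  shows "(int (gdeg n R v) \<le> cfg D v) \<longleftrightarrow> (v \<notin> D \<and> zeros v \<subseteq> D)"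
proof -
  define Ob where "Ob = card {j. is_cell n R v j \<and> T v j}"
  define Z where "Z = card (zeros v)"
  define N where "N = card {a\<in>D. is_cell n R v a}"
  have g: "gdeg n R v = Ob + Z" using gdeg_row[OF v(1)] by (simp add: Ob_def Z_def)
  have cf: "cfg D v = int Ob - (if v \<in> D then int (Ob + Z) else 0) + int N"
    using c0_row[OF v] nb_row[OF v(1)] g by (simp add: cfg_def Ob_def N_def)
  obtain j where j: "is_cell n R v j" "\<not> T v j" using ew_zero v by blast
  have Zp: "Z > 0" using j fin_zeros by (auto simp: Z_def zeros_def card_gt_0_iff)
  have "N \<le> Ob + Z"
  proof -
    have "N \<le> card {c. is_cell n R v c}" unfolding N_def by (rule card_mono[OF fin_row]) auto
    also have "\<dots> = Ob + Z"
    proof -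
      have e: "{c. is_cell n R v c} = {c. is_cell n R v c \<and> T v c} \<union> zeros v" by (auto simp: zeros_def)
      have "finite {c. is_cell n R v c \<and> T v c}" by (rule finite_subset[OF _ fin_row]) auto
      thus ?thesis unfolding e using fin_zeros
        by (subst card_Un_disjoint) (auto simp: Ob_def Z_def zeros_def)
    qed
    finally show ?thesis .
  qed
  show ?thesis
  proof (cases "v \<in> D")
    case True
    have "cfg D v = int N - int Z" using cf True by simp
    hence "\<not> (int (gdeg n R v) \<le> cfg D v)" using g \<open>N \<le> Ob + Z\<close> Zp by linarith
    thus ?thesis using True by blast
  next
    case False
    have sub: "{a\<in>D. is_cell n R v a} \<subseteq> zeros v"
      proof
      fix a assume "a \<in> {a\<in>D. is_cell n R v a}"
      hence "a \<in> D" "is_cell n R v a" by auto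
      hence "\<not> T v a" using consisD2[OF cD _ _ False] by blast
      thus "a \<in> zeros v" using \<open>is_cell n R v a\<close> by (simp add: zeros_def)
    qed
    have "N \<ge> Z \<longleftrightarrow> zeros v \<subseteq> D"
    proof
      assume "Z \<le> N"
      hence "{a\<in>D. is_cell n R v a} = zeros v"
        proof -
          have "card {a\<in>D. is_cell n R v a} = card (zeros v)" using \<open>Z \<le> N\<close> card_mono[OF fin_zeros sub] unfolding N_def Z_def by linarith
          thus ?thesis by (rule card_subset_eq[OF fin_zeros sub])
        qed
      thus "zeros v \<subseteq> D" by auto
    next
      assume "zeros v \<subseteq> D"
      hence "{a\<in>D. is_cell n R v a} = zeros v" using sub by (auto simp: zeros_def)
      thus "Z \<le> N" by (simp add: N_def Z_def)
    qed
    moreover have "cfg D v = int Ob + int N" using cf False by simp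
    ultimately show ?thesis using False g by auto
  qed
qed

lemma stab_col:
  assumes v: "v \<in> colset n R" and cD: "consis D" and fD: "finite D"
  shows "(int (gdeg n R v) \<le> cfg D v) \<longleftrightarrow> (v \<notin> D \<and> ones v \<subseteq> D)"
proof -
  define Ob where "Ob = card (ones v)"
  define Z where "Z = card {r. is_cell n R r v \<and> \<not> T r v}"
  define N where "N = card {a\<in>D. is_cell n R a v}"
  have g: "gdeg n R v = Ob + Z" using gdeg_col[OF v] by (simp add: Ob_def Z_def)
  have cf: "cfg D v = int Z - (if v \<in> D then int (Ob + Z) else 0) + int N"
    using c0_col[OF v] nb_col[OF v] g by (simp add: cfg_def Z_def N_def)
  have c0v: "is_cell n R 0 v" using v zero_R col_nz by (auto simp: is_cell_def)
  hence "0 \<in> ones v" using ew_top by (simp add: ones_def)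
  hence Op: "Ob > 0" using fin_ones by (auto simp: Ob_def card_gt_0_iff)
  have "N \<le> Ob + Z"
  proof -
    have "N \<le> card {r. is_cell n R r v}" unfolding N_def by (rule card_mono[OF fin_col]) auto
    also have "\<dots> = Ob + Z"
    proof -
      have e: "{r. is_cell n R r v} = ones v \<union> {r. is_cell n R r v \<and> \<not> T r v}" by (auto simp: ones_def)
      have "finite {r. is_cell n R r v \<and> \<not> T r v}" by (rule finite_subset[OF _ fin_col]) auto
      thus ?thesis unfolding e using fin_ones
        by (subst card_Un_disjoint) (auto simp: Ob_def Z_def ones_def)
    qed
    finally show ?thesis .
  qed
  show ?thesis
  proof (cases "v \<in> D")
    case True
    have "cfg D v = int N - int Ob" using cf True by simp
    hence "\<not> (int (gdeg n R v) \<le> cfg D v)" using g \<open>N \<le> Ob + Z\<close> Op by linarith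
    thus ?thesis using True by blast
  next
    case False
    have sub: "{a\<in>D. is_cell n R a v} \<subseteq> ones v"
      proof
      fix a assume "a \<in> {a\<in>D. is_cell n R a v}"
      hence "a \<in> D" "is_cell n R a v" by auto
      hence "T a v" using consisD1[OF cD _ _ False] by blast
      thus "a \<in> ones v" using \<open>is_cell n R a v\<close> by (simp add: ones_def)
    qed
    have "N \<ge> Ob \<longleftrightarrow> ones v \<subseteq> D"
    proof
      assume "Ob \<le> N"
      hence "{a\<in>D. is_cell n R a v} = ones v"
        proof -
          have "card {a\<in>D. is_cell n R a v} = card (ones v)" using \<open>Ob \<le> N\<close> card_mono[OF fin_ones sub] unfolding N_def Ob_def by linarith
          thus ?thesis by (rule card_subset_eq[OF fin_ones sub])
        qed
      thus "ones v \<subseteq> D" by auto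
    next
      assume "ones v \<subseteq> D"
      hence "{a\<in>D. is_cell n R a v} = ones v" using sub by (auto simp: ones_def)
      thus "Ob \<le> N" by (simp add: N_def Ob_def)
    qed
    moreover have "cfg D v = int Z + int N" using cf False by simp
    ultimately show ?thesis using False g by auto
  qed
qed

lemma cs_Suc: "canon_state n R c (Suc k) =
   (unstable_in n R (Xs k) (snd (canon_state n R c k)),
    topple n R (unstable_in n R (Xs k) (snd (canon_state n R c k))) (snd (canon_state n R c k)))"
  by (simp add: Let_def Xs_def)

lemma blk_Suc_raw: "blk (Suc k) = unstable_in n R (Xs k) (snd (canon_state n R c0 k))"
  unfolding blk_def canon_block_def cs_Suc by simp

lemma blk0: "blk 0 = {0}" by (simp add: blk_def canon_block_def)

lemma Dk_Suc: "Dk (Suc k) = Dk k \<union> blk (Suc k)"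
  by (auto simp: Dk_def atMost_Suc)

lemma Dk0: "Dk 0 = {0}" by (simp add: Dk_def blk0)

lemma Xs_sub: "Xs k \<subseteq> {0..n}" using R_sub col_sub by (simp add: Xs_def)

lemma blk_Suc:
  assumes "invk k"
  shows "blk (Suc k) = {v \<in> Xs k. 0 < v \<and> v \<le> n \<and> v \<notin> Dk k \<and> ready (Dk k) v}"
proof -
  have st: "snd (canon_state n R c0 k) = cfg (Dk k)" and cD: "consis (Dk k)" and fD: "finite (Dk k)"
    using assms by (auto simp: invk_def intro: finite_subset)
  have "int (gdeg n R v) \<le> cfg (Dk k) v \<longleftrightarrow> v \<notin> Dk k \<and> ready (Dk k) v"
    if "v \<in> Xs k" "0 < v" for v
  proof (cases "v \<in> R")
    case True thus ?thesis using stab_row[OF True _ cD fD] that by (simp add: ready_def)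
  next
    case False
    hence "v \<in> colset n R" using that(1) by (simp add: Xs_def split: if_splits)
    thus ?thesis using stab_col[OF _ cD fD] False by (simp add: ready_def)
  qed
  thus ?thesis unfolding blk_Suc_raw st unstable_in_def by auto
qed

lemma invk0: "invk 0"
proof -
  have "snd (canon_state n R c0 0) = cfg {0}"
    by (rule ext) (simp add: topple_def cfg_def)
  moreover have "consis {0}" unfolding consis_def
  proof (intro allI impI conjI)
    fix r c assume "is_cell n R r c"
    thus "r \<in> {0} \<and> c \<notin> {0} \<Longrightarrow> T r c" using ew_top by blast
    show "c \<in> {0} \<and> r \<notin> {0} \<Longrightarrow> \<not> T r c" using cellD[OF \<open>is_cell n R r c\<close>] col_nz by blast
  qed
  ultimately show ?thesis by (simp add: invk_def Dk0)
qed

lemma invk_Suc: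
  assumes I: "invk k" shows "invk (Suc k)"
proof -
  define D where "D = Dk k"
  define B where "B = blk (Suc k)"
  have Bc: "B = {v \<in> Xs k. 0 < v \<and> v \<le> n \<and> v \<notin> D \<and> ready D v}" using blk_Suc[OF I] by (simp add: B_def D_def)
  have st: "snd (canon_state n R c0 k) = cfg D" and cD: "consis D" and Ds: "D \<subseteq> {0..n}" and D0: "0 \<in> D"
    using I by (auto simp: invk_def D_def)
  have fD: "finite D" using Ds finite_subset by blast
  have Bs: "B \<subseteq> {0..n}" using Bc by auto
  have fB: "finite B" using Bs finite_subset by blast
  have disj: "B \<inter> D = {}" using Bc by auto
  have DS: "Dk (Suc k) = D \<union> B" by (simp add: Dk_Suc D_def B_def)
  have "snd (canon_state n R c0 (Suc k)) = topple n R B (cfg D)"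
    using cs_Suc[of c0 k] blk_Suc_raw[of k] st by (simp add: B_def)
  also have "\<dots> = cfg (D \<union> B)"
  proof (rule ext)
    fix w
    have e: "{a \<in> D \<union> B. a \<le> n \<and> adj n R a w} = {a \<in> D. a \<le> n \<and> adj n R a w} \<union> {a \<in> B. a \<le> n \<and> adj n R a w}"
      by auto
    have "card {a \<in> D \<union> B. a \<le> n \<and> adj n R a w} = card {a \<in> D. a \<le> n \<and> adj n R a w} + card {a \<in> B. a \<le> n \<and> adj n R a w}"
      unfolding e using fD fB disj by (intro card_Un_disjoint) auto
    thus "topple n R B (cfg D) w = cfg (D \<union> B) w"
      using disj by (auto simp: topple_def cfg_def)
  qed
  finally have s1: "snd (canon_state n R c0 (Suc k)) = cfg (D \<union> B)" .
  have "consis (D \<union> B)"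
    unfolding consis_def
  proof (intro allI impI conjI)
    fix r c assume cell: "is_cell n R r c"
    hence rR: "r \<in> R" and cC: "c \<in> colset n R" using cellD by auto
    { assume a: "r \<in> D \<union> B \<and> c \<notin> D \<union> B"
      show "T r c"
      proof (cases "r \<in> D")
        case True thus ?thesis using consisD1[OF cD cell] a by blast
      next
        case False
        hence "zeros r \<subseteq> D" using a Bc rR by (auto simp: ready_def)
        thus ?thesis using a cell by (auto simp: zeros_def)
      qed }
    { assume a: "c \<in> D \<union> B \<and> r \<notin> D \<union> B"
      show "\<not> T r c"
      proof (cases "c \<in> D")
        case True thus ?thesis using consisD2[OF cD cell] a by blast
      next
        case False
        hence "ones c \<subseteq> D" using a Bc col_notR[OF cC] by (auto simp: ready_def)
        thus ?thesis using a cell by (auto simp: ones_def)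
      qed }
  qed
  thus ?thesis using s1 Ds Bs D0 DS by (simp add: invk_def)
qed

lemma invk: "invk k"
  by (induct k) (auto intro: invk0 invk_Suc)


lemma Dk_sub: "Dk k \<subseteq> {0..n}" using invk[of k] by (simp add: invk_def)
lemma Dk_0: "0 \<in> Dk k" using invk[of k] by (simp add: invk_def)
lemma consisk: "consis (Dk k)" using invk[of k] by (simp add: invk_def)

lemma blkS: "blk (Suc k) = {v \<in> Xs k. 0 < v \<and> v \<le> n \<and> v \<notin> Dk k \<and> ready (Dk k) v}"
  using blk_Suc[OF invk] .

lemma blk_Xs: "v \<in> blk (Suc k) \<Longrightarrow> v \<in> Xs k" using blkS by auto
lemma blk_disj: "v \<in> blk (Suc k) \<Longrightarrow> v \<notin> Dk k" using blkS by auto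

lemma Dk_mono: "m \<le> k \<Longrightarrow> Dk m \<subseteq> Dk k" unfolding Dk_def by (rule UN_mono) auto
lemma blk_Dk: "m \<le> k \<Longrightarrow> blk m \<subseteq> Dk k" by (auto simp: Dk_def)

lemma blk_unique_lt: "a < b \<Longrightarrow> v \<in> blk a \<Longrightarrow> v \<in> blk b \<Longrightarrow> False"
proof -
  assume "a < b" "v \<in> blk a" "v \<in> blk b"
  then obtain b' where b: "b = Suc b'" "a \<le> b'" by (cases b) auto
  thus False using blk_Dk[OF b(2)] blk_disj[of v b'] \<open>v \<in> blk a\<close> \<open>v \<in> blk b\<close> by auto
qed

lemma blk_unique: "v \<in> blk a \<Longrightarrow> v \<in> blk b \<Longrightarrow> a = b"
  using blk_unique_lt by (metis linorder_neqE_nat)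

definition tm where "tm v = block_index n R c0 v"

lemma tm_eq: "v \<in> blk a \<Longrightarrow> tm v = a"
  unfolding tm_def block_index_def blk_def[symmetric]
  by (rule Least_equality) (auto dest: blk_unique)

lemma tm0: "tm 0 = 0" using tm_eq blk0 by auto

lemma stall:
  assumes e1: "blk (Suc k) = {}" and e2: "blk (Suc (Suc k)) = {}"
  shows "Dk k = {0..n}"
proof -
  have DS: "Dk (Suc k) = Dk k" using Dk_Suc e1 by simp
  have nr: "\<not> ready (Dk k) v" if "v \<in> R \<union> colset n R" "v \<notin> Dk k" for v
  proof -
    have v0: "0 < v" using that Dk_0[of k] by (cases v) auto
    have vn: "v \<le> n" using that R_sub col_sub by auto
    have "v \<in> Xs k \<or> v \<in> Xs (Suc k)" using that by (auto simp: Xs_def)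
    thus ?thesis
    proof
      assume "v \<in> Xs k" thus ?thesis using e1 blkS[of k] v0 vn that(2) by auto
    next
      assume "v \<in> Xs (Suc k)" thus ?thesis using e2 blkS[of "Suc k"] v0 vn that(2) DS by auto
    qed
  qed
  define A where "A = R - Dk k"
  define B where "B = colset n R - Dk k"
  have fB: "finite B" using col_sub finite_subset by (auto simp: B_def)
  have hA: "\<forall>r\<in>A. \<exists>c\<in>B. is_cell n R r c \<and> \<not> T r c"
  proof
    fix r assume "r \<in> A"
    hence "\<not> zeros r \<subseteq> Dk k" "r \<in> R" using nr[of r] by (auto simp: A_def ready_def)
    thus "\<exists>c\<in>B. is_cell n R r c \<and> \<not> T r c" by (auto simp: zeros_def B_def dest: cellD)
  qed
  have hB: "\<forall>c\<in>B. \<exists>r\<in>A. is_cell n R r c \<and> T r c"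
  proof
    fix c assume "c \<in> B"
    hence "\<not> ones c \<subseteq> Dk k" "c \<notin> R" using nr[of c] col_notR by (auto simp: B_def ready_def)
    thus "\<exists>r\<in>A. is_cell n R r c \<and> T r c" by (auto simp: ones_def A_def dest: cellD)
  qed
  have "B = {}" by (rule nostuck[OF ew_rect ew_out fB hA hB])
  hence "A = {}" using hA by auto
  thus ?thesis using \<open>B = {}\<close> RC_all Dk_sub[of k] by (auto simp: A_def B_def)
qed

lemma grow: "Dk k \<noteq> {0..n} \<Longrightarrow> card (Dk k) < card (Dk (Suc (Suc k)))"
proof -
  assume ne: "Dk k \<noteq> {0..n}"
  have "Dk k \<subset> Dk (Suc (Suc k))"
  proof -
    have sub: "Dk k \<subseteq> Dk (Suc (Suc k))" by (rule Dk_mono) simp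
    from stall ne have "blk (Suc k) \<noteq> {} \<or> blk (Suc (Suc k)) \<noteq> {}" by blast
    then obtain v where "v \<in> Dk (Suc (Suc k))" "v \<notin> Dk k"
    proof
      assume "blk (Suc k) \<noteq> {}"
      then obtain v where "v \<in> blk (Suc k)" by blast
      thus ?thesis using that blk_disj[of v k] blk_Dk[of "Suc k" "Suc (Suc k)"] by auto
    next
      assume "blk (Suc (Suc k)) \<noteq> {}"
      then obtain v where "v \<in> blk (Suc (Suc k))" by blast
      thus ?thesis using that blk_disj[of v "Suc k"] blk_Dk[of "Suc (Suc k)" "Suc (Suc k)"] Dk_Suc[of k] by auto
    qed
    thus ?thesis using sub by blast
  qed
  moreover have "finite (Dk (Suc (Suc k)))" using Dk_sub finite_subset by blast
  ultimately show ?thesis by (rule psubset_card_mono[rotated])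
qed

lemma all_in: assumes "v \<in> {0..n}" shows "\<exists>a. v \<in> blk a"
proof (rule ccontr)
  assume "\<nexists>a. v \<in> blk a"
  hence ne: "\<And>k. Dk k \<noteq> {0..n}" using assms by (auto simp: Dk_def)
  have "card (Dk (2 * m)) \<ge> m" for m
  proof (induct m)
    case (Suc m)
    have "card (Dk (2*m)) < card (Dk (Suc (Suc (2*m))))" by (rule grow[OF ne])
    thus ?case using Suc by simp
  qed simp
  from this[of "n+2"] have "card (Dk (2*(n+2))) \<ge> n + 2" .
  moreover have "card (Dk (2*(n+2))) \<le> card {0..n}" by (rule card_mono) (auto simp: Dk_sub)
  ultimately show False by simp
qed

lemma tm_blk: "v \<in> {0..n} \<Longrightarrow> v \<in> blk (tm v)"
  using all_in tm_eq by metis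

lemma tm_neq: assumes "v \<in> R" "w \<in> colset n R" shows "tm v \<noteq> tm w"
proof
  assume eq: "tm v = tm w"
  have vn: "v \<in> {0..n}" using assms(1) R_sub by blast
  have wn: "w \<in> {0..n}" using assms(2) col_sub by blast
  have bv: "v \<in> blk (tm v)" using tm_blk[OF vn] .
  have bw: "w \<in> blk (tm v)" using tm_blk[OF wn] eq by simp
  show False
  proof (cases "tm v")
    case 0 thus ?thesis using bw blk0 col_nz assms(2) by auto
  next
    case (Suc m)
    have "v \<in> Xs m" "w \<in> Xs m" using bv bw Suc blk_Xs[of _ m] by auto
    thus ?thesis using assms col_notR by (cases "even m") (auto simp: Xs_def)
  qed
qed

lemma cellT: assumes cell: "is_cell n R r c" shows "T r c \<longleftrightarrow> tm r < tm c"
proof -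
  have rR: "r \<in> R" and cC: "c \<in> colset n R" using cellD[OF cell] by auto
  have br: "r \<in> blk (tm r)" and bc: "c \<in> blk (tm c)" using tm_blk[of r] tm_blk[of c] rR cC R_sub col_sub by blast+
  have ne: "tm r \<noteq> tm c" using tm_neq rR cC by blast
  show ?thesis
  proof (cases "tm r < tm c")
    case True
    then obtain b where b: "tm c = Suc b" "tm r \<le> b" by (cases "tm c") auto
    hence "r \<in> Dk b" "c \<notin> Dk b" using blk_Dk[OF b(2)] br blk_disj[of c b] bc by auto
    thus ?thesis using consisD1[OF consisk[of b] cell] True by blast
  next
    case False
    hence lt: "tm c < tm r" using ne by simp
    then obtain b where b: "tm r = Suc b" "tm c \<le> b" by (cases "tm r") auto
    hence "c \<in> Dk b" "r \<notin> Dk b" using blk_Dk[OF b(2)] bc blk_disj[of r b] br by auto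
    thus ?thesis using consisD2[OF consisk[of b] cell] False by blast
  qed
qed

lemma Dk_SS: "Dk (Suc (Suc k)) = Dk k \<union> blk (Suc k) \<union> blk (Suc (Suc k))"
  by (simp add: Dk_Suc)

lemma par_col: assumes cC: "c \<in> colset n R"
  shows "\<exists>r. is_cell n R r c \<and> T r c \<and> Suc (tm r) = tm c"
proof -
  have bc: "c \<in> blk (tm c)" using tm_blk[of c] cC col_sub by blast
  obtain m where m: "tm c = Suc m" using bc blk0 col_nz[OF cC] by (cases "tm c") auto
  have cm: "c \<in> blk (Suc m)" using bc m by simp
  hence em: "even m" using blk_Xs[of c m] col_notR[OF cC] by (auto simp: Xs_def split: if_splits)
  have rd: "ones c \<subseteq> Dk m" using cm blkS[of m] col_notR[OF cC] by (auto simp: ready_def)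
  show ?thesis
  proof (cases m)
    case 0
    have "is_cell n R 0 c" using cC zero_R col_nz[OF cC] by (auto simp: is_cell_def)
    thus ?thesis using ew_top tm0 m 0 by auto
  next
    case (Suc m1)
    then obtain m2 where m2: "m = Suc (Suc m2)" using em by (cases m1) auto
    hence e2: "even m2" using em by simp
    have "c \<notin> blk (Suc m2)" using cm blk_unique m2 by fastforce
    moreover have "c \<notin> Dk m2" using blk_disj[of c m] cm Dk_mono[of m2 m] m2 by auto
    moreover have "c \<in> Xs m2" "0 < c" "c \<le> n" using e2 cC col_nz[OF cC] col_sub by (auto simp: Xs_def)
    ultimately have "\<not> ready (Dk m2) c" using blkS[of m2] by auto
    then obtain r where r: "r \<in> ones c" "r \<notin> Dk m2" using col_notR[OF cC] by (auto simp: ready_def)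
    have rR: "r \<in> R" using r(1) cellD by (auto simp: ones_def)
    have "r \<notin> blk (Suc m2)" using blk_Xs[of r m2] e2 rR by (auto simp: Xs_def colset_def)
    hence "r \<in> blk m" using rd r Dk_SS[of m2] m2 by auto
    thus ?thesis using tm_eq r(1) m by (auto simp: ones_def)
  qed
qed

lemma par_row: assumes rR: "r \<in> R" and r0: "r \<noteq> 0"
  shows "\<exists>c. is_cell n R r c \<and> \<not> T r c \<and> Suc (tm c) = tm r"
proof -
  have br: "r \<in> blk (tm r)" using tm_blk[of r] rR R_sub by blast
  obtain m where m: "tm r = Suc m" using br blk0 r0 by (cases "tm r") auto
  have rm: "r \<in> blk (Suc m)" using br m by simp
  hence om: "odd m" using blk_Xs[of r m] rR by (auto simp: Xs_def colset_def split: if_splits)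
  have rd: "zeros r \<subseteq> Dk m" using rm blkS[of m] rR by (auto simp: ready_def)
  obtain m1 where m1: "m = Suc m1" using om by (cases m) auto
  show ?thesis
  proof (cases m1)
    case 0
    obtain c where c: "is_cell n R r c" "\<not> T r c" using ew_zero rR r0 by blast
    hence "c \<in> Dk 1" using rd m1 0 by (auto simp: zeros_def)
    moreover have "c \<noteq> 0" using c cellD col_nz by blast
    ultimately have "c \<in> blk 1" using Dk_Suc[of 0] Dk0 by auto
    thus ?thesis using tm_eq c m m1 0 by auto
  next
    case (Suc m2)
    hence mm: "m = Suc (Suc m2)" using m1 by simp
    hence e2: "odd m2" using om by simp
    have "r \<notin> blk (Suc m2)" using rm blk_unique mm by fastforce
    moreover have "r \<notin> Dk m2" using blk_disj[of r m] rm Dk_mono[of m2 m] mm by auto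
    moreover have "r \<in> Xs m2" "0 < r" "r \<le> n" using e2 rR r0 R_sub by (auto simp: Xs_def)
    ultimately have "\<not> ready (Dk m2) r" using blkS[of m2] by auto
    then obtain c where c: "c \<in> zeros r" "c \<notin> Dk m2" using rR by (auto simp: ready_def)
    have cC: "c \<in> colset n R" using c(1) cellD by (auto simp: zeros_def)
    have "c \<notin> blk (Suc m2)" using blk_Xs[of c m2] e2 col_notR[OF cC] by (auto simp: Xs_def)
    hence "c \<in> blk m" using rd c Dk_SS[of m2] mm by auto
    thus ?thesis using tm_eq c(1) m by (auto simp: zeros_def)
  qed
qed

lemma suppl_tm: "suppl n R T i j \<longleftrightarrow> tm i < tm j"
  by (simp add: suppl_def tm_def c0_def)

end


theorem corollary4p18:
  assumes "ferrers n R"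
    and "T \<in> EWtab n R"
    and "is_cell n R j k"
  shows "cornersupport n R T j k \<longleftrightarrow>
    (\<exists>j' k'. is_cell n R j' k' \<and> j' \<noteq> j \<and> k' \<noteq> k \<and>
      (\<not> T j k \<longrightarrow> T j' k' \<and> is_cell n R j k' \<and> \<not> T j k' \<and> \<not> suppl n R T j' k) \<and>
      (T j k \<longrightarrow> \<not> T j' k' \<and> is_cell n R j' k \<and> T j' k \<and> suppl n R T j k'))"
proof -
  interpret E: ewt n R T using assms(1,2) by unfold_locales
  have cell: "is_cell n R j k" by fact
  have jR: "j \<in> R" and kC: "k \<in> colset n R" using E.cellD[OF cell] by auto
  have S: "\<And>a b. suppl n R T a b \<longleftrightarrow> E.tm a < E.tm b" by (rule E.suppl_tm)
  have neq: "\<And>a b. a \<in> R \<Longrightarrow> b \<in> colset n R \<Longrightarrow> E.tm a \<noteq> E.tm b" by (rule E.tm_neq)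
  show ?thesis
  proof
    assume "cornersupport n R T j k"
    then obtain j' k' where j'R: "j' \<in> R" and k'C: "k' \<in> colset n R" and ne: "j' \<noteq> j" "k' \<noteq> k"
      and h1: "suppl n R T j' k' \<noteq> T j k" and h2: "suppl n R T j' k = T j k" and h3: "suppl n R T j k' = T j k"
      unfolding cornersupport_def by blast
    have n1: "E.tm j' \<noteq> E.tm k'" "E.tm j' \<noteq> E.tm k" "E.tm j \<noteq> E.tm k'" "E.tm j \<noteq> E.tm k"
      using neq j'R k'C jR kC by auto
    show "\<exists>j' k'. is_cell n R j' k' \<and> j' \<noteq> j \<and> k' \<noteq> k \<and>
      (\<not> T j k \<longrightarrow> T j' k' \<and> is_cell n R j k' \<and> \<not> T j k' \<and> \<not> suppl n R T j' k) \<and>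
      (T j k \<longrightarrow> \<not> T j' k' \<and> is_cell n R j' k \<and> T j' k \<and> suppl n R T j k')"
    proof (cases "T j k")
      case False
      have ch: "E.tm k < E.tm j'" "E.tm j' < E.tm k'" "E.tm k' < E.tm j"
        using h1 h2 h3 False n1 unfolding S by auto
      have j0: "j \<noteq> 0" using False E.ew_top cell by metis
      obtain c where c: "is_cell n R j c" "\<not> T j c" "Suc (E.tm c) = E.tm j" using E.par_row[OF jR j0] by blast
      have cC: "c \<in> colset n R" using E.cellD[OF c(1)] by auto
      obtain r where r: "is_cell n R r c" "T r c" "Suc (E.tm r) = E.tm c" using E.par_col[OF cC] by blast
      have "r \<noteq> j" using r(3) c(3) by auto
      moreover have "c \<noteq> k" using ch c(3) by auto
      moreover have "\<not> suppl n R T r k" unfolding S using ch c(3) r(3) by auto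
      ultimately show ?thesis using r c False by blast
    next
      case True
      have ch: "E.tm j < E.tm k'" "E.tm k' < E.tm j'" "E.tm j' < E.tm k"
        using h1 h2 h3 True n1 unfolding S by auto
      obtain r where r: "is_cell n R r k" "T r k" "Suc (E.tm r) = E.tm k" using E.par_col[OF kC] by blast
      have rR: "r \<in> R" using E.cellD[OF r(1)] by auto
      have r0: "r \<noteq> 0"
      proof
        assume "r = 0" hence "E.tm r = 0" using E.tm0 by simp
        thus False using ch r(3) by simp
      qed
      obtain c where c: "is_cell n R r c" "\<not> T r c" "Suc (E.tm c) = E.tm r" using E.par_row[OF rR r0] by blast
      have "r \<noteq> j" using r(3) ch by auto
      moreover have "c \<noteq> k" using r(3) c(3) by auto
      moreover have "suppl n R T j c" unfolding S using ch c(3) r(3) by auto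
      ultimately show ?thesis using r c True by blast
    qed
  next
    assume "\<exists>j' k'. is_cell n R j' k' \<and> j' \<noteq> j \<and> k' \<noteq> k \<and>
      (\<not> T j k \<longrightarrow> T j' k' \<and> is_cell n R j k' \<and> \<not> T j k' \<and> \<not> suppl n R T j' k) \<and>
      (T j k \<longrightarrow> \<not> T j' k' \<and> is_cell n R j' k \<and> T j' k \<and> suppl n R T j k')"
    then obtain j' k' where c': "is_cell n R j' k'" and ne: "j' \<noteq> j" "k' \<noteq> k"
      and h0: "\<not> T j k \<longrightarrow> T j' k' \<and> is_cell n R j k' \<and> \<not> T j k' \<and> \<not> suppl n R T j' k"
      and h1: "T j k \<longrightarrow> \<not> T j' k' \<and> is_cell n R j' k \<and> T j' k \<and> suppl n R T j k'" by blast
    have j'R: "j' \<in> R" and k'C: "k' \<in> colset n R" using E.cellD[OF c'] by auto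
    have ct: "\<And>a b. is_cell n R a b \<Longrightarrow> suppl n R T a b \<longleftrightarrow> T a b"
      using E.cellT S by blast
    show "cornersupport n R T j k"
      unfolding cornersupport_def
    proof (intro bexI conjI)
      show "j' \<in> R" "k' \<in> colset n R" "j' \<noteq> j" "k' \<noteq> k" by fact+
      show "suppl n R T j' k' \<noteq> T j k" using h0 h1 ct[OF c'] by auto
      show "suppl n R T j' k = T j k" using h0 h1 ct by auto
      show "suppl n R T j k' = T j k" using h0 h1 ct by auto
    qed
  qed
qed

end
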